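(* Let $n = 6k+r$ with integers $k\ge 0$ and $r\in\{0,1,2,3,4,5\}$. There is no balanced permutation sequence of length $n$ in each of the following cases: $r=0$ and $k\ge 2$; $r=1$ and $k\ge 11$; $r=2$ and $k\ge 3$; $r=3$ and $k\ge 8$; $r=4$ and $k\ge 4$; $r=5$ and $k\ge 9$.
   Context: Let $n$ be a positive integer, $N$ a set of $n$ players and $[n]=\{1,\ldots,n\}$ a set of $n$ items. A permutation sequence of length $n$ is an ordered tuple $(\pi_1,\ldots,\pi_n)$ of bijections $\pi_t : N\to[n]$; on day $t$ player $i$ receives item $\pi_t(i)$. For $t\in[n]$ and $i\in N$, $Z_i^t$ is the multiset $\{\pi_1(i),\ldots,\pi_t(i)\}$, and for $j\in[t]$, $Z_i^t[j]$ is the $j$-th smallest element of $Z_i^t$ (counted with multiplicity). The sequence is called balanced if for every $t\in[n]$, every $i\in N$ and every $j\in[t]$: $Z_i^t[j]\le \lceil jn/t\rceil$. *)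

theory Defs
  imports Complex_Main "HOL-Library.Multiset"
begin

definition perm_seq :: "'a set \<Rightarrow> nat \<Rightarrow> (nat \<Rightarrow> 'a \<Rightarrow> nat) \<Rightarrow> bool" where
  "perm_seq N n \<pi> \<longleftrightarrow> (\<forall>t\<in>{1..n}. bij_betw (\<pi> t) N {1..n})"

definition Z :: "(nat \<Rightarrow> 'a \<Rightarrow> nat) \<Rightarrow> nat \<Rightarrow> 'a \<Rightarrow> nat multiset" where
  "Z \<pi> t i = mset (map (\<lambda>s. \<pi> s i) [1..<t+1])"

definition Zth :: "(nat \<Rightarrow> 'a \<Rightarrow> nat) \<Rightarrow> nat \<Rightarrow> 'a \<Rightarrow> nat \<Rightarrow> nat" where
  "Zth \<pi> t i j = sorted_list_of_multiset (Z \<pi> t i) ! (j - 1)"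

definition balanced :: "'a set \<Rightarrow> nat \<Rightarrow> (nat \<Rightarrow> 'a \<Rightarrow> nat) \<Rightarrow> bool" where
  "balanced N n \<pi> \<longleftrightarrow> perm_seq N n \<pi> \<and>
     (\<forall>t\<in>{1..n}. \<forall>i\<in>N. \<forall>j\<in>{1..t}.
        int (Zth \<pi> t i j) \<le> ceiling (real (j * n) / real t))"

end

theory Submission
  imports Defs
begin

lemma Zth_count:
  assumes "1 \<le> j" "j \<le> t" "Zth \<pi> t i j \<le> b"
  shows "j \<le> length (filter (\<lambda>x. x \<le> b) (map (\<lambda>s. \<pi> s i) [1..<t+1]))"
proof -
  define xs where "xs = sorted_list_of_multiset (Z \<pi> t i)"
  have mx: "mset xs = mset (map (\<lambda>s. \<pi> s i) [1..<t+1])"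
    unfolding xs_def Z_def by simp
  have len: "length xs = t"
    using arg_cong[OF mx, of size] by simp
  have so: "sorted xs" unfolding xs_def by simp
  have jth: "xs ! (j - 1) \<le> b" using assms(3) unfolding Zth_def xs_def by simp
  have all: "\<forall>x\<in>set (take j xs). x \<le> b"
  proof
    fix x assume "x \<in> set (take j xs)"
    then obtain m where m: "m < length (take j xs)" "x = take j xs ! m"
      by (metis in_set_conv_nth)
    have "m < j" "m < length xs" using m(1) by auto
    hence "x = xs ! m" using m by simp
    also have "\<dots> \<le> xs ! (j - 1)"
      using so \<open>m < j\<close> assms len by (intro sorted_nth_mono) auto
    finally show "x \<le> b" using jth by simp
  qed
  have "j = length (filter (\<lambda>x. x \<le> b) (take j xs))"
    using all len assms by (simp add: min_def)
  also have "\<dots> \<le> length (filter (\<lambda>x. x \<le> b) (take j xs @ drop j xs))"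
    by (simp only: filter_append length_append le_add1)
  also have "\<dots> = length (filter (\<lambda>x. x \<le> b) xs)" by (simp only: append_take_drop_id)
  also have "\<dots> = size (filter_mset (\<lambda>x. x \<le> b) (mset xs))"
    by (metis mset_filter size_mset)
  also have "\<dots> = length (filter (\<lambda>x. x \<le> b) (map (\<lambda>s. \<pi> s i) [1..<t+1]))"
    by (metis mx mset_filter size_mset)
  finally show ?thesis .
qed

lemma ceil_iff:
  fixes x j n t :: nat
  assumes "t > 0"
  shows "int x \<le> ceiling (real (j * n) / real t) \<longleftrightarrow> x \<le> (j * n + t - 1) div t"
proof -
  have "int x \<le> ceiling (real (j * n) / real t) \<longleftrightarrow> real x - 1 < real (j * n) / real t"
    by (simp add: le_ceiling_iff)
  also have "\<dots> \<longleftrightarrow> (real x - 1) * real t < real (j * n)"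
    using assms by (simp add: pos_less_divide_eq)
  also have "\<dots> \<longleftrightarrow> real (x * t) < real (j * n + t)"
    by (simp add: algebra_simps)
  also have "\<dots> \<longleftrightarrow> x * t < j * n + t" by linarith
  also have "\<dots> \<longleftrightarrow> x * t \<le> j * n + t - 1" using assms by linarith
  also have "\<dots> \<longleftrightarrow> x \<le> (j * n + t - 1) div t"
    using assms by (simp add: less_eq_div_iff_mult_less_eq)
  finally show ?thesis .
qed

lemma player:
  fixes a1 a2 a3 a4 b1 b2 b3 :: nat
  assumes "b1 \<le> b2" "b2 \<le> b3"
   "1 \<le> length (filter (\<lambda>x. x \<le> b3) [a1,a2])"
   "1 \<le> length (filter (\<lambda>x. x \<le> b2) [a1,a2,a3])"
   "1 \<le> length (filter (\<lambda>x. x \<le> b1) [a1,a2,a3,a4])"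
   "2 \<le> length (filter (\<lambda>x. x \<le> b3) [a1,a2,a3,a4])"
  shows "((if b2 < a1 then 1 else 0) + (if b3 < a1 then 1 else 0))
       + ((if b2 < a2 then 1 else 0) + (if b3 < a2 then 1 else 0))
       + ((if b1 < a3 then 1 else 0) + (if b3 < a3 then 1 else 0))
       + (if b3 < a4 then 1 else 0) \<le> (4::nat)"
  using assms by (auto split: if_splits)

lemma sum_ind:
  fixes b n :: nat
  shows "(\<Sum>v\<in>{1..n}. (if b < v then 1 else 0 :: nat)) = n - b"
proof (induction n)
  case 0 then show ?case by simp
next
  case (Suc n)
  have "{1..Suc n} = insert (Suc n) {1..n}" by auto
  then show ?case using Suc by (simp add: Suc_diff_le)
qed

theorem mainTheorem3:
  fixes N :: "'a set" and n k r :: nat and \<pi> :: "nat \<Rightarrow> 'a \<Rightarrow> nat"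
  assumes "finite N" and "card N = n"
    and "n = 6 * k + r" and "r < 6"
    and "(r = 0 \<and> k \<ge> 2) \<or> (r = 1 \<and> k \<ge> 11) \<or> (r = 2 \<and> k \<ge> 3) \<or>
         (r = 3 \<and> k \<ge> 8) \<or> (r = 4 \<and> k \<ge> 4) \<or> (r = 5 \<and> k \<ge> 9)"
  shows "\<not> balanced N n \<pi>"
proof
  assume bal: "balanced N n \<pi>"
  have n12: "n \<ge> 12" using assms(3,5) by auto
  define b1 where "b1 = (n + 3) div 4"
  define b2 where "b2 = (n + 2) div 3"
  define b3 where "b3 = (n + 1) div 2"
  have b12: "b1 \<le> b2" unfolding b1_def b2_def by simp
  have b23: "b2 \<le> b3" unfolding b3_def b2_def by simp
  have b3n: "b3 \<le> n" unfolding b3_def by simp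
  have b2n: "b2 \<le> n" using b23 b3n by simp
  have b1n: "b1 \<le> n" using b12 b2n by simp
  have bij: "\<And>t. t \<in> {1..n} \<Longrightarrow> bij_betw (\<pi> t) N {1..n}"
    using bal unfolding balanced_def perm_seq_def by blast
  have cnt: "\<And>t i j. t \<in> {1..n} \<Longrightarrow> i \<in> N \<Longrightarrow> j \<in> {1..t} \<Longrightarrow>
      j \<le> length (filter (\<lambda>x. x \<le> (j * n + t - 1) div t) (map (\<lambda>s. \<pi> s i) [1..<t+1]))"
  proof -
    fix t i j assume h: "t \<in> {1..n}" "i \<in> N" "j \<in> {1..t}"
    have "int (Zth \<pi> t i j) \<le> ceiling (real (j * n) / real t)"
      using bal h unfolding balanced_def by blast
    hence "Zth \<pi> t i j \<le> (j * n + t - 1) div t" using ceil_iff[of t] h by simp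
    thus "j \<le> length (filter (\<lambda>x. x \<le> (j * n + t - 1) div t) (map (\<lambda>s. \<pi> s i) [1..<t+1]))"
      using Zth_count[of j t \<pi> i] h by simp
  qed
  define g1 where "g1 = (\<lambda>v::nat. (if b2 < v then 1 else 0) + (if b3 < v then 1 else (0::nat)))"
  define g3 where "g3 = (\<lambda>v::nat. (if b1 < v then 1 else 0) + (if b3 < v then 1 else (0::nat)))"
  define g4 where "g4 = (\<lambda>v::nat. (if b3 < v then 1 else (0::nat)))"
  define psi where "psi = (\<lambda>i. g1 (\<pi> 1 i) + g1 (\<pi> 2 i) + g3 (\<pi> 3 i) + g4 (\<pi> 4 i))"
  have up2: "[1..<2+1] = [1,2]" by (simp add: upt_rec)
  have up3: "[1..<3+1] = [1,2,3]" by (simp add: upt_rec)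
  have up4: "[1..<4+1] = [1,2,3,4]" by (simp add: upt_rec)
  have pb: "psi i \<le> 4" if i: "i \<in> N" for i
  proof -
    have e1: "(1 * n + 2 - 1) div 2 = b3" unfolding b3_def by simp
    have e2: "(1 * n + 3 - 1) div 3 = b2" unfolding b2_def by simp
    have e3: "(1 * n + 4 - 1) div 4 = b1" unfolding b1_def by simp
    have e4: "(2 * n + 4 - 1) div 4 = b3" unfolding b3_def by presburger
    have c1: "1 \<le> length (filter (\<lambda>x. x \<le> b3) [\<pi> 1 i, \<pi> 2 i])"
      using cnt[of 2 i 1, unfolded up2 e1] i n12 by simp
    have c2: "1 \<le> length (filter (\<lambda>x. x \<le> b2) [\<pi> 1 i, \<pi> 2 i, \<pi> 3 i])"
      using cnt[of 3 i 1, unfolded up3 e2] i n12 by simp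
    have c3: "1 \<le> length (filter (\<lambda>x. x \<le> b1) [\<pi> 1 i, \<pi> 2 i, \<pi> 3 i, \<pi> 4 i])"
      using cnt[of 4 i 1, unfolded up4 e3] i n12 by simp
    have c4: "2 \<le> length (filter (\<lambda>x. x \<le> b3) [\<pi> 1 i, \<pi> 2 i, \<pi> 3 i, \<pi> 4 i])"
      using cnt[of 4 i 2, unfolded up4 e4] i n12 by simp
    show ?thesis unfolding psi_def g1_def g3_def g4_def
      using player[OF b12 b23 c1 c2 c3 c4] by simp
  qed
  have upper: "(\<Sum>i\<in>N. psi i) \<le> 4 * n"
    using sum_bounded_above[of N psi 4] pb assms(2) by (simp add: mult.commute)
  have reidx: "(\<Sum>i\<in>N. g (\<pi> t i)) = (\<Sum>v\<in>{1..n}. g v)" if "t \<in> {1..n}" for g :: "nat \<Rightarrow> nat" and t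
    using sum.reindex_bij_betw[OF bij[OF that], of g] by simp
  have s1: "(\<Sum>v\<in>{1..n}. g1 v) = (n - b2) + (n - b3)"
    unfolding g1_def by (simp only: sum.distrib sum_ind)
  have s3: "(\<Sum>v\<in>{1..n}. g3 v) = (n - b1) + (n - b3)"
    unfolding g3_def by (simp only: sum.distrib sum_ind)
  have s4: "(\<Sum>v\<in>{1..n}. g4 v) = (n - b3)"
    unfolding g4_def by (simp only: sum_ind)
  have "(\<Sum>i\<in>N. psi i) = (\<Sum>i\<in>N. g1 (\<pi> 1 i)) + (\<Sum>i\<in>N. g1 (\<pi> 2 i))
        + (\<Sum>i\<in>N. g3 (\<pi> 3 i)) + (\<Sum>i\<in>N. g4 (\<pi> 4 i))"
    unfolding psi_def by (simp add: sum.distrib)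
  also have "\<dots> = 2 * ((n - b2) + (n - b3)) + ((n - b1) + (n - b3)) + (n - b3)"
    using reidx[of 1] reidx[of 2] reidx[of 3] reidx[of 4] n12 s1 s3 s4 by simp
  finally have tot: "(\<Sum>i\<in>N. psi i) = 2 * ((n - b2) + (n - b3)) + ((n - b1) + (n - b3)) + (n - b3)" .
  have key: "b1 + 2 * b2 + 4 * b3 < 3 * n"
  proof (cases "n \<ge> 50")
    case True
    have "b1 * 4 \<le> n + 3" unfolding b1_def by (rule div_times_less_eq_dividend)
    moreover have "b2 * 3 \<le> n + 2" unfolding b2_def by (rule div_times_less_eq_dividend)
    moreover have "b3 * 2 \<le> n + 1" unfolding b3_def by (rule div_times_less_eq_dividend)
    ultimately show ?thesis using True by linarith
  next
    case False
    hence "k \<le> 8" using assms(3) by linarith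
    hence "n \<in> {12,18,20,24,26,28,30,32,34,36,38,40,42,44,46,48}"
      using assms(3,5) False by (auto simp: le_Suc_eq numeral_eq_Suc)
    thus ?thesis unfolding b1_def b2_def b3_def by auto
  qed
  have "(\<Sum>i\<in>N. psi i) + b1 + 2 * b2 + 4 * b3 = 7 * n"
  proof -
    have "n - b1 + b1 = n" "n - b2 + b2 = n" "n - b3 + b3 = n" using b1n b2n b3n by simp_all
    moreover have "\<And>S x1 x2 x3. S = 2 * (x2 + x3) + (x1 + x3) + x3 \<Longrightarrow> x1 + b1 = n
      \<Longrightarrow> x2 + b2 = n \<Longrightarrow> x3 + b3 = n \<Longrightarrow> S + b1 + 2 * b2 + 4 * b3 = 7 * (n::nat)"
      by presburger
    ultimately show ?thesis using tot by blast
  qed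
  then show False using upper key by linarith
qed

end
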